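(* Suppose the $[n, n-k]$-code $C=C_{\Omega}(D, kO)$ has covering radius $\rho(C)=n-\dim(C)-1=k-1$. Let $P\in E(\mathbb{F}_q)\setminus D$ be any rational point on the elliptic curve $E$ (writing $P=(\alpha,\beta)$ when $P\neq O$). Then: 1. Any vector $v\in C_{\Omega}(D, kO-P)\setminus C$ is a deep hole of $C$. 2. If $P=O$, then the syndrome of $v$ is $H(k)v^T=(0,\cdots,0,\sum_{i=1}^{n}\alpha_i^{k/2}v_i,0,\cdots, 0)^T$ if $k$ is even, and $H(k)v^T=(0,\cdots,0,\sum_{i=1}^{n}\alpha_i^{(k-3)/2}\beta_iv_i)^T$ if $k$ is odd. 3. If $P=(\alpha,\beta)\neq O$, then the syndrome of $v$ is $H(k)v^T=b(1,\alpha, \cdots, \alpha^{\lfloor k/2\rfloor}, \beta, \beta\alpha,\cdots, \beta\alpha^{\lfloor (k-3)/2\rfloor})^T$, where $b=\sum_{i=1}^{n}v_i \neq 0.$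
   Context: Let $\mathbb{F}_q$ be a finite field with $q$ elements, $q$ an odd prime power. Let $E$ be the elliptic curve over $\mathbb{F}_q$ given by $y^2=x^3+sx+t$ ($s,t\in\mathbb{F}_q$) together with the point at infinity $O$. Let $D=\{P_i=(\alpha_i,\beta_i)\mid i=1,\dots,n\}\subset E(\mathbb{F}_q)\setminus\{O\}$ be a set of $n$ rational points, and let $k$ be an integer with $2\le k\le n-2$. For a divisor $V$, $\mathcal{L}(V)$ is the Riemann–Roch space of rational functions $f$ with $\mathrm{div}(f)\ge -V$ (together with $0$), and $\Omega(V)$ is the space of Weil differentials $\omega$ with $\mathrm{div}(\omega)\ge V$ (together with $0$). For a divisor $G$ with support disjoint from $D$, the residue code $C_{\Omega}(D,G)$ is the image of $\Omega(G-D)\to\mathbb{F}_q^n$, $\omega\mapsto(\mathrm{res}_{P_1}(\omega),\dots,\mathrm{res}_{P_n}(\omega))$, and the functional code $C_{\mathcal{L}}(D,G)$ is the image of $\mathcal{L}(G)\to\mathbb{F}_q^n$, $f\mapsto(f(P_1),\dots,f(P_n))$; these two codes are dual to each other. Let $C=C_{\Omega}(D,kO)$, whose dual is $C_{\mathcal{L}}(D,kO)$. Since $\mathcal{L}(kO)$ has basis $\{x^iy^j\mid i\ge 0,\ j\in\{0,1\},\ 2i+3j\le k\}$, a parity-check matrix of $C$ is the $k\times n$ matrix $H(k)$ whose $i$-th column is $(1,\alpha_i,\dots,\alpha_i^{\lfloor k/2\rfloor},\beta_i,\alpha_i\beta_i,\dots,\alpha_i^{\lfloor (k-3)/2\rfloor}\beta_i)^T$.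 A deep hole of $C$ is a word $v\in\mathbb{F}_q^n$ whose Hamming distance to $C$ equals the covering radius $\rho(C)=\max_{u\in\mathbb{F}_q^n}\min_{c\in C}d(u,c)$. *)

theory Defs
  imports Main
begin

datatype 'a ecpoint = Inf | Aff 'a 'a

definition on_curve :: "'a::field \<Rightarrow> 'a \<Rightarrow> 'a \<Rightarrow> 'a \<Rightarrow> bool" where
  "on_curve s t x y \<longleftrightarrow> y ^ 2 = x ^ 3 + s * x + t"

text \<open>Exponent pairs (i,j) of the basis x^i y^j of L(mO): j in {0,1}, 2i+3j \<le> m.\<close>
definition mons :: "nat \<Rightarrow> (nat \<times> nat) set" where
  "mons m = {(i, j) \<in> {..m} \<times> {..1}. 2 * i + 3 * j \<le> m}"

definition evL :: "nat \<Rightarrow> (nat \<times> nat \<Rightarrow> 'a::field) \<Rightarrow> 'a \<Rightarrow> 'a \<Rightarrow> 'a" where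
  "evL m c a b = (\<Sum>(i, j)\<in>mons m. c (i, j) * a ^ i * b ^ j)"

text \<open>Functional code C_L(D, kO - P): evaluations at D of functions in L(kO - P).
  For P = O this is L((k-1)O); for affine P it is the subspace of L(kO) vanishing at P.\<close>
definition Lcode_minus :: "nat \<Rightarrow> ('a::field \<times> 'a) list \<Rightarrow> 'a ecpoint \<Rightarrow> 'a list set" where
  "Lcode_minus k D P = (case P of
      Inf \<Rightarrow> {map (\<lambda>(x, y). evL (k - 1) c x y) D | c. True}
    | Aff a b \<Rightarrow> {map (\<lambda>(x, y). evL k c x y) D | c. evL k c a b = 0})"

definition Lcode :: "nat \<Rightarrow> ('a::field \<times> 'a) list \<Rightarrow> 'a list set" where
  "Lcode k D = {map (\<lambda>(x, y). evL k c x y) D | c. True}"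

definition dual_code :: "nat \<Rightarrow> 'a::field list set \<Rightarrow> 'a list set" where
  "dual_code n S = {v. length v = n \<and> (\<forall>w\<in>S. (\<Sum>i<n. v ! i * w ! i) = 0)}"

text \<open>Residue codes C_Omega(D,kO) and C_Omega(D,kO-P), as duals of the functional codes.\<close>
definition Omega_code :: "nat \<Rightarrow> ('a::field \<times> 'a) list \<Rightarrow> 'a list set" where
  "Omega_code k D = dual_code (length D) (Lcode k D)"

definition Omega_code_minus :: "nat \<Rightarrow> ('a::field \<times> 'a) list \<Rightarrow> 'a ecpoint \<Rightarrow> 'a list set" where
  "Omega_code_minus k D P = dual_code (length D) (Lcode_minus k D P)"

definition hamming :: "'a list \<Rightarrow> 'a list \<Rightarrow> nat" where
  "hamming u w = card {i. i < length u \<and> u ! i \<noteq> w ! i}"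

definition dist_code :: "'a list \<Rightarrow> 'a list set \<Rightarrow> nat" where
  "dist_code u C = Min (hamming u ` C)"

definition covering_radius :: "nat \<Rightarrow> 'a list set \<Rightarrow> nat" where
  "covering_radius n C = Max ((\<lambda>u. dist_code u C) ` {u. length u = n})"

definition deep_hole :: "nat \<Rightarrow> 'a list set \<Rightarrow> 'a list \<Rightarrow> bool" where
  "deep_hole n C v \<longleftrightarrow> length v = n \<and> dist_code v C = covering_radius n C"

definition hcol :: "nat \<Rightarrow> 'a::field \<Rightarrow> 'a \<Rightarrow> 'a list" where
  "hcol k a b = map (\<lambda>i. a ^ i) [0..<k div 2 + 1] @ map (\<lambda>i. a ^ i * b) [0..<(k - 1) div 2]"

definition syndrome :: "nat \<Rightarrow> ('a::field \<times> 'a) list \<Rightarrow> 'a list \<Rightarrow> 'a list" where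
  "syndrome k D v = map (\<lambda>r. \<Sum>l<length D. hcol k (fst (D ! l)) (snd (D ! l)) ! r * v ! l) [0..<k]"

end

theory Submission
  imports Defs "HOL-Computational_Algebra.Polynomial"
begin


lemma even_card_invol:
  assumes "finite S" "\<forall>x\<in>S. f x \<in> S \<and> f x \<noteq> x \<and> f (f x) = x"
  shows "even (card S)"
  using assms
proof (induction "card S" arbitrary: S rule: less_induct)
  case less
  show ?case
  proof (cases "S = {}")
    case False
    then obtain x where x: "x \<in> S" by auto
    define S' where "S' = S - {x, f x}"
    have fx: "f x \<in> S" "f x \<noteq> x" using less.prems x by auto
    have cS: "card S = card S' + 2"
    proof -
      have sub: "{x, f x} \<subseteq> S" using x fx by auto
      have c2: "card {x, f x} = 2" using fx by simp
      have "card {x, f x} \<le> card S" by (rule card_mono[OF less.prems(1) sub])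
      moreover have "card S' = card S - card {x, f x}" unfolding S'_def
        by (rule card_Diff_subset) (use sub in auto)
      ultimately show ?thesis using c2 by simp
    qed
    have "even (card S')"
    proof (rule less.hyps)
      show "card S' < card S" using cS by simp
      show "finite S'" using less.prems by (simp add: S'_def)
      show "\<forall>y\<in>S'. f y \<in> S' \<and> f y \<noteq> y \<and> f (f y) = y"
      proof
        fix y assume y: "y \<in> S'"
        then have y1: "y \<in> S" "y \<noteq> x" "y \<noteq> f x" by (auto simp: S'_def)
        have h: "f y \<in> S" "f y \<noteq> y" "f (f y) = y" using less.prems(2) y1(1) by auto
        have "f (f x) = x" using less.prems(2) x by auto
        then have "f y \<noteq> x" "f y \<noteq> f x" using h y1 by metis+
        then show "f y \<in> S' \<and> f y \<noteq> y \<and> f (f y) = y" using h by (auto simp: S'_def)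
      qed
    qed
    then show ?thesis using cS by simp
  qed simp
qed

lemma two_nz:
  assumes "odd (card (UNIV :: 'a::{finite,field} set))"
  shows "(2::'a) \<noteq> 0"
proof
  assume two: "(2::'a) = 0"
  have "even (card (UNIV :: 'a set))"
  proof (rule even_card_invol[of _ "\<lambda>x. x + 1"])
    show "\<forall>x\<in>(UNIV::'a set). x + 1 \<in> UNIV \<and> x + 1 \<noteq> x \<and> x + 1 + 1 = x"
    proof
      fix x :: 'a
      have "x + 1 + 1 = x + 2" by (simp add: add.assoc)
      then have "x + 1 + 1 = x" using two by simp
      moreover have "x + 1 \<noteq> x" by simp
      ultimately show "x + 1 \<in> UNIV \<and> x + 1 \<noteq> x \<and> x + 1 + 1 = x" by simp
    qed
  qed simp
  then show False using assms by simp
qed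



lemma UL:
  fixes es :: "('i \<Rightarrow> 'a::field) list"
  assumes "finite I" "length es < card I"
  shows "\<exists>c. (\<exists>i\<in>I. c i \<noteq> 0) \<and> (\<forall>e\<in>set es. (\<Sum>i\<in>I. e i * c i) = 0)"
  using assms
proof (induction "length es" arbitrary: es I)
  case 0
  then obtain i0 where "i0 \<in> I" by fastforce
  then show ?case using 0 by (intro exI[of _ "\<lambda>_. 1"]) auto
next
  case (Suc n ees)
  then obtain e es where ees: "ees = e # es" by (cases ees) auto
  have Cons_prems: "finite I" "length (e#es) < card I" using Suc ees by auto
  note Cons_IH = Suc.hyps(1)
  show ?case
  proof (cases "\<forall>i\<in>I. e i = 0")
    case True
    from Cons_IH[of es I] Cons_prems Suc.hyps(2) ees obtain c where c: "\<exists>i\<in>I. c i \<noteq> 0" "\<forall>e\<in>set es. (\<Sum>i\<in>I. e i * c i) = 0"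
      by auto
    then show ?thesis using True ees by (intro exI[of _ c]) auto
  next
    case False
    then obtain i0 where i0: "i0 \<in> I" "e i0 \<noteq> 0" by auto
    define I' where "I' = I - {i0}"
    have fI': "finite I'" using Cons_prems by (simp add: I'_def)
    have cI: "card I' = card I - 1" using i0 Cons_prems by (simp add: I'_def)
    define es' where "es' = map (\<lambda>e' i. e' i - e' i0 * e i / e i0) es"
    have nl: "n = length es'" using Suc.hyps(2) ees by (simp add: es'_def)
    have "length es' < card I'" using Cons_prems cI by (simp add: es'_def)
    from Cons_IH[of es' I', OF nl fI' this] obtain c' where c': "\<exists>i\<in>I'. c' i \<noteq> 0"
      "\<forall>e\<in>set es'. (\<Sum>i\<in>I'. e i * c' i) = 0" by blast
    define c where "c = (\<lambda>i. if i = i0 then - (\<Sum>j\<in>I'. e j * c' j) / e i0 else c' i)"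
    have split: "(\<Sum>i\<in>I. f i * c i) = f i0 * c i0 + (\<Sum>j\<in>I'. f j * c' j)" for f
    proof -
      have "I = insert i0 I'" using i0 by (auto simp: I'_def)
      then have "(\<Sum>i\<in>I. f i * c i) = f i0 * c i0 + (\<Sum>j\<in>I'. f j * c j)"
        using fI' i0 Cons_prems(1) by (simp add: I'_def sum.remove)
      also have "(\<Sum>j\<in>I'. f j * c j) = (\<Sum>j\<in>I'. f j * c' j)"
        by (intro sum.cong) (auto simp: c_def I'_def)
      finally show ?thesis .
    qed
    have "(\<Sum>i\<in>I. e i * c i) = 0" using i0 by (simp only: split) (simp add: c_def)
    moreover have "(\<Sum>i\<in>I. e' i * c i) = 0" if "e' \<in> set es" for e'
    proof -
      have "(\<lambda>i. e' i - e' i0 * e i / e i0) \<in> set es'" using that by (simp add: es'_def)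
      then have z: "(\<Sum>j\<in>I'. (e' j - e' i0 * e j / e i0) * c' j) = 0" using c'(2) by fastforce
      have "(\<Sum>j\<in>I'. (e' j - e' i0 * e j / e i0) * c' j)
          = (\<Sum>j\<in>I'. e' j * c' j) - e' i0 / e i0 * (\<Sum>j\<in>I'. e j * c' j)"
        by (simp add: algebra_simps sum_subtractf sum_distrib_left)
      then show ?thesis using z i0 by (simp only: split) (simp add: c_def field_simps)
    qed
    moreover have "\<exists>i\<in>I. c i \<noteq> 0" using c' by (auto simp: c_def I'_def)
    ultimately show ?thesis using ees by (intro exI[of _ c]) auto
  qed
qed



lemma sum_count_le_size:
  assumes "finite A"
  shows "(\<Sum>a\<in>A. count M a) \<le> size M"
proof -
  have "(\<Sum>a\<in>A. count M a) = (\<Sum>a\<in>A \<inter> set_mset M. count M a)"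
    using assms by (intro sum.mono_neutral_right) auto
  also have "\<dots> \<le> (\<Sum>a\<in>set_mset M. count M a)"
    by (intro sum_mono2) auto
  also have "\<dots> = size M" by (simp add: size_multiset_overloaded_eq)
  finally show ?thesis .
qed

lemma GL:
  fixes p :: "'a::field poly" and T :: "('a \<times> 'a) set"
  assumes fin: "finite T" and p0: "p \<noteq> 0"
    and fib: "\<forall>q\<in>T. \<forall>q'\<in>T. fst q = fst q' \<longrightarrow> snd q' = snd q \<or> snd q' = - snd q"
    and root: "\<forall>q\<in>T. poly p (fst q) = 0"
    and pair: "\<forall>a b. (a,b) \<in> T \<longrightarrow> (a,-b) \<in> T \<longrightarrow> b \<noteq> 0 \<longrightarrow> [:-a,1:]^2 dvd p"
  shows "card T \<le> degree p"
proof -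
  have "card T = (\<Sum>q\<in>T. 1)" by simp
  also have "\<dots> = (\<Sum>a\<in>fst ` T. \<Sum>q\<in>{q. q \<in> T \<and> fst q = a}. 1)"
    by (rule sum.group[symmetric]) (use fin in auto)
  also have "\<dots> = (\<Sum>a\<in>fst ` T. card {q. q \<in> T \<and> fst q = a})" by simp
  also have "\<dots> \<le> (\<Sum>a\<in>fst ` T. order a p)"
  proof (rule sum_mono)
    fix a assume "a \<in> fst ` T"
    then obtain b where ab: "(a,b) \<in> T" by force
    have sub: "{q. q \<in> T \<and> fst q = a} \<subseteq> {(a,b),(a,-b)}"
      using fib ab by fastforce
    have o1: "1 \<le> order a p" using root ab p0 order_root[of p a] by fastforce
    show "card {q. q \<in> T \<and> fst q = a} \<le> order a p"
    proof (cases "(a,-b) \<in> T \<and> b \<noteq> 0")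
      case True
      then have "[:-a,1:]^2 dvd p" using pair ab by blast
      then have "2 \<le> order a p" using p0 order_divides by blast
      moreover have "card {q. q \<in> T \<and> fst q = a} \<le> card {(a,b),(a,-b)}"
        by (rule card_mono[OF _ sub]) auto
      moreover have "card {(a,b),(a,-b)} \<le> 2" by (rule card_insert_le_m1) auto
      ultimately show ?thesis by linarith
    next
      case False
      have "{q. q \<in> T \<and> fst q = a} \<subseteq> {(a,b)}"
      proof
        fix q assume q: "q \<in> {q. q \<in> T \<and> fst q = a}"
        then have "q = (a,b) \<or> q = (a,-b)" using sub by blast
        then show "q \<in> {(a,b)}" using q False by auto
      qed
      then have "card {q. q \<in> T \<and> fst q = a} \<le> 1"
        using card_mono[of "{(a,b)}"] by fastforce
      then show ?thesis using o1 by linarith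
    qed
  qed
  also have "\<dots> = (\<Sum>a\<in>fst ` T. count (proots p) a)" using p0 by simp
  also have "\<dots> \<le> size (proots p)" by (rule sum_count_le_size) (use fin in auto)
  also have "\<dots> \<le> degree p" by (rule size_proots_le)
  finally show ?thesis .
qed

definition inL :: "nat \<Rightarrow> 'a::field poly \<Rightarrow> 'a poly \<Rightarrow> bool" where
  "inL m A B \<longleftrightarrow> 2 * degree A \<le> m \<and> (B = 0 \<or> 2 * degree B + 3 \<le> m)"

definition cubic :: "'a::field \<Rightarrow> 'a \<Rightarrow> 'a poly" where
  "cubic s t = [:t, s, 0, 1:]"

lemma poly_cubic: "poly (cubic s t) a = a^3 + s * a + t"
  by (simp add: cubic_def algebra_simps power3_eq_cube)

lemma degree_cubic: "degree (cubic s t) = 3"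
  by (simp add: cubic_def)

lemma cubic_nz: "cubic s t \<noteq> 0"
  by (simp add: cubic_def)

lemma pair_roots:
  fixes A B :: "'a::field poly"
  assumes two: "(2::'a) \<noteq> 0" and "poly A a + poly B a * b = 0" "poly A a + poly B a * (-b) = 0" "b \<noteq> 0"
  shows "poly A a = 0" "poly B a = 0"
proof -
  have "2 * poly A a = 0" using assms(2,3) by (simp add: algebra_simps)
  then show "poly A a = 0" using two by simp
  then show "poly B a = 0" using assms(2,4) by simp
qed

lemma ZC:
  fixes A B :: "'a::field poly" and T :: "('a \<times> 'a) set"
  assumes two: "(2::'a) \<noteq> 0" and fin: "finite T"
    and on: "\<forall>q\<in>T. (snd q)^2 = poly (cubic s t) (fst q)"
    and van: "\<forall>q\<in>T. poly A (fst q) + poly B (fst q) * snd q = 0"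
    and nz: "A \<noteq> 0 \<or> B \<noteq> 0" and L: "inL m A B"
  shows "card T \<le> m"
proof -
  define M where "M = A^2 - B^2 * cubic s t"
  have degM: "M \<noteq> 0 \<and> degree M \<le> m"
  proof (cases "B = 0")
    case True
    then show ?thesis using nz L by (simp add: M_def inL_def degree_power_eq)
  next
    case False
    have dB: "degree (B^2 * cubic s t) = 2 * degree B + 3"
      using False by (simp add: degree_mult_eq degree_power_eq cubic_nz degree_cubic)
    show ?thesis
    proof (cases "A = 0")
      case True
      then show ?thesis using False L dB cubic_nz by (simp add: M_def inL_def)
    next
      case Af: False
      have dA: "degree (A^2) = 2 * degree A" using Af by (simp add: degree_power_eq)
      have ne: "2 * degree A \<noteq> 2 * degree B + 3" by presburger
      show ?thesis
      proof (cases "2 * degree A < 2 * degree B + 3")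
        case True
        then have "degree M = 2 * degree B + 3"
          unfolding M_def diff_conv_add_uminus using dA dB
          by (subst degree_add_eq_right) auto
        then show ?thesis using L False unfolding inL_def by (metis add_eq_0_iff_both_eq_0 zero_neq_numeral degree_0)
      next
        case False2: False
        then have "degree M = 2 * degree A"
          unfolding M_def diff_conv_add_uminus using dA dB ne
          by (subst degree_add_eq_left) auto
        moreover have "degree M > 0" using calculation False2 by linarith
        ultimately show ?thesis using L unfolding inL_def by auto
      qed
    qed
  qed
  have fib: "\<forall>q\<in>T. \<forall>q'\<in>T. fst q = fst q' \<longrightarrow> snd q' = snd q \<or> snd q' = - snd q"
    using on by (metis power2_eq_iff)
  have root: "\<forall>q\<in>T. poly M (fst q) = 0"
  proof
    fix q assume q: "q \<in> T"
    have "poly A (fst q) = - poly B (fst q) * snd q" using van q by (simp add: eq_neg_iff_add_eq_0)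
    then show "poly M (fst q) = 0" using on q
      by (simp add: M_def power_mult_distrib power2_eq_square)
  qed
  have pair: "\<forall>a b. (a,b) \<in> T \<longrightarrow> (a,-b) \<in> T \<longrightarrow> b \<noteq> 0 \<longrightarrow> [:-a,1:]^2 dvd M"
  proof (intro allI impI)
    fix a b assume h: "(a,b) \<in> T" "(a,-b) \<in> T" "b \<noteq> 0"
    have e1: "poly A a + poly B a * b = 0" using van h(1) by force
    have e2: "poly A a + poly B a * (-b) = 0" using van h(2) by force
    have "poly A a = 0" "poly B a = 0"
      using pair_roots[OF two e1 e2 h(3)] by auto
    then have "[:-a,1:] dvd A" "[:-a,1:] dvd B" by (auto simp: poly_eq_0_iff_dvd)
    then have "[:-a,1:]^2 dvd A^2" "[:-a,1:]^2 dvd B^2 * cubic s t"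
      by (auto intro: dvd_mult2 dvd_power_same)
    then show "[:-a,1:]^2 dvd M" unfolding M_def by (rule dvd_diff)
  qed
  have "card T \<le> degree M" using GL[OF fin _ fib root pair] degM by blast
  then show ?thesis using degM by linarith
qed



lemma CROSS:
  fixes A B A1 B1 :: "'a::field poly" and T :: "('a \<times> 'a) set"
  assumes two: "(2::'a) \<noteq> 0" and fin: "finite T"
    and on: "\<forall>q\<in>T. (snd q)^2 = poly (cubic s t) (fst q)"
    and van: "\<forall>q\<in>T. poly A (fst q) + poly B (fst q) * snd q = 0"
    and van1: "\<forall>q\<in>T. poly A1 (fst q) + poly B1 (fst q) * snd q = 0"
    and L: "inL m A B" and L1: "inL (m+1) A1 B1" and card: "m \<le> card T"
  shows "A * B1 = A1 * B"
proof (rule ccontr)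
  assume ne: "A * B1 \<noteq> A1 * B"
  define p where "p = A * B1 - A1 * B"
  have p0: "p \<noteq> 0" using ne by (simp add: p_def)
  have m2: "2 \<le> m" using ne L L1 by (auto simp: inL_def)
  have d1: "degree (A * B1) \<le> m - 1"
  proof (cases "B1 = 0")
    case False
    then have "2 * degree B1 + 3 \<le> m + 1" using L1 by (simp add: inL_def)
    moreover have "2 * degree A \<le> m" using L by (simp add: inL_def)
    moreover have "degree (A * B1) \<le> degree A + degree B1" by (rule degree_mult_le)
    ultimately show ?thesis by linarith
  qed simp
  have d2: "degree (A1 * B) \<le> m - 1"
  proof (cases "B = 0")
    case False
    then have "2 * degree B + 3 \<le> m" using L by (simp add: inL_def)
    moreover have "2 * degree A1 \<le> m + 1" using L1 by (simp add: inL_def)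
    moreover have "degree (A1 * B) \<le> degree A1 + degree B" by (rule degree_mult_le)
    ultimately show ?thesis by linarith
  qed simp
  have dp: "degree p \<le> m - 1"
    unfolding p_def using d1 d2 degree_diff_le_max[of "A * B1" "A1 * B"] by linarith
  have fib: "\<forall>q\<in>T. \<forall>q'\<in>T. fst q = fst q' \<longrightarrow> snd q' = snd q \<or> snd q' = - snd q"
    using on by (metis power2_eq_iff)
  have root: "\<forall>q\<in>T. poly p (fst q) = 0"
  proof
    fix q assume q: "q \<in> T"
    have "poly A (fst q) = - poly B (fst q) * snd q" using van q by (simp add: eq_neg_iff_add_eq_0)
    moreover have "poly A1 (fst q) = - poly B1 (fst q) * snd q" using van1 q by (simp add: eq_neg_iff_add_eq_0)
    ultimately show "poly p (fst q) = 0" by (simp add: p_def)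
  qed
  have pair: "\<forall>a b. (a,b) \<in> T \<longrightarrow> (a,-b) \<in> T \<longrightarrow> b \<noteq> 0 \<longrightarrow> [:-a,1:]^2 dvd p"
  proof (intro allI impI)
    fix a b assume h: "(a,b) \<in> T" "(a,-b) \<in> T" "b \<noteq> 0"
    have e1: "poly A a + poly B a * b = 0" using van h(1) by force
    have e2: "poly A a + poly B a * (-b) = 0" using van h(2) by force
    have e3: "poly A1 a + poly B1 a * b = 0" using van1 h(1) by force
    have e4: "poly A1 a + poly B1 a * (-b) = 0" using van1 h(2) by force
    have "poly A a = 0" "poly B a = 0" using pair_roots[OF two e1 e2 h(3)] by auto
    moreover have "poly A1 a = 0" "poly B1 a = 0" using pair_roots[OF two e3 e4 h(3)] by auto
    ultimately have "[:-a,1:] dvd A" "[:-a,1:] dvd B" "[:-a,1:] dvd A1" "[:-a,1:] dvd B1"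
      by (auto simp: poly_eq_0_iff_dvd)
    then have "[:-a,1:]^2 dvd A * B1" "[:-a,1:]^2 dvd A1 * B"
      using mult_dvd_mono[of "[:-a,1:]" A "[:-a,1:]" B1] mult_dvd_mono[of "[:-a,1:]" A1 "[:-a,1:]" B]
      by (simp_all only: power2_eq_square)
    then show "[:-a,1:]^2 dvd p" unfolding p_def by (rule dvd_diff)
  qed
  have "card T \<le> degree p" by (rule GL[OF fin p0 fib root pair])
  then show False using dp card m2 by linarith
qed

lemma PAR:
  fixes A B A1 B1 :: "'a::field poly"
  assumes r2: "2 \<le> r" and L: "inL r A B" and nL: "\<not> inL (r-1) A B"
    and L1: "inL (r+1) A1 B1" and nL1: "\<not> inL r A1 B1" and eq: "A * B1 = A1 * B"
  shows False
proof (cases "even r")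
  case True
  then obtain u where u: "r = 2 * u" by blast
  have dA: "degree A = u" using L nL u r2 unfolding inL_def by (auto; presburger)
  have A0: "A \<noteq> 0" using dA u r2 by auto
  have f1: "2 * degree A1 \<le> 2*u+1" "B1 = 0 \<or> 2 * degree B1 + 3 \<le> 2*u+1"
    "\<not> (2 * degree A1 \<le> 2*u \<and> (B1 = 0 \<or> 2 * degree B1 + 3 \<le> 2*u))"
    using L1 nL1 u unfolding inL_def by auto
  have A1le: "2 * degree A1 \<le> 2*u" using f1(1) by presburger
  have B1a: "B1 \<noteq> 0" "2 * degree B1 + 3 > 2 * u" using f1(3) A1le by auto
  have B1a: "B1 \<noteq> 0" "2 * degree B1 + 3 > 2 * u" "2 * degree B1 + 3 \<le> 2 * u + 1"
    using f1(2) B1a by auto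
  have B1: "B1 \<noteq> 0" "2 * degree B1 + 3 = 2 * u + 1" using B1a by auto
  have "A * B1 \<noteq> 0" using A0 B1 by simp
  then have A1: "A1 \<noteq> 0" and B0: "B \<noteq> 0" using eq by auto
  have "degree (A * B1) = degree A + degree B1" using A0 B1 by (simp add: degree_mult_eq)
  moreover have "degree (A1 * B) = degree A1 + degree B" using A1 B0 by (simp add: degree_mult_eq)
  moreover have X1: "2 * degree A1 \<le> 2 * u + 1" "2 * degree B + 3 \<le> 2 * u"
    using L1 L B0 u unfolding inL_def by auto
  ultimately have "degree A + degree B1 = degree A1 + degree B" using eq by simp
  then show False using dA B1(2) X1 by presburger
next
  case False
  then obtain u where u: "r = 2 * u + 1" using oddE by blast
  have f1: "2 * degree A \<le> 2*u+1" "B = 0 \<or> 2 * degree B + 3 \<le> 2*u+1"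
    "\<not> (2 * degree A \<le> 2*u \<and> (B = 0 \<or> 2 * degree B + 3 \<le> 2*u))"
    using L nL u unfolding inL_def by auto
  have Ale: "2 * degree A \<le> 2*u" using f1(1) by presburger
  have B0a: "B \<noteq> 0" "2 * degree B + 3 > 2 * u" using f1(3) Ale by auto
  have B0a: "B \<noteq> 0" "2 * degree B + 3 > 2 * u" "2 * degree B + 3 \<le> 2 * u + 1"
    using f1(2) B0a by auto
  have B0: "B \<noteq> 0" "2 * degree B + 3 = 2 * u + 1" using B0a by auto
  have dA1: "degree A1 = u + 1" using L1 nL1 u unfolding inL_def by (auto; presburger)
  have A1: "A1 \<noteq> 0" using dA1 by auto
  have "A1 * B \<noteq> 0" using A1 B0 by simp
  then have A0: "A \<noteq> 0" and B1: "B1 \<noteq> 0" using eq by auto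
  have "degree (A * B1) = degree A + degree B1" using A0 B1 by (simp add: degree_mult_eq)
  moreover have "degree (A1 * B) = degree A1 + degree B" using A1 B0 by (simp add: degree_mult_eq)
  moreover have X1: "2 * degree A \<le> 2 * u + 1" "2 * degree B1 + 3 \<le> 2 * u + 2"
    using L1 L B1 u unfolding inL_def by auto
  ultimately have "degree A + degree B1 = degree A1 + degree B" using eq by simp
  then show False using dA1 B0(2) X1 by presburger
qed



definition polA :: "nat \<Rightarrow> (nat \<times> nat \<Rightarrow> 'a::field) \<Rightarrow> 'a poly" where
  "polA N c = (\<Sum>i\<in>{i. (i,0) \<in> mons N}. monom (c (i,0)) i)"
definition polB :: "nat \<Rightarrow> (nat \<times> nat \<Rightarrow> 'a::field) \<Rightarrow> 'a poly" where
  "polB N c = (\<Sum>i\<in>{i. (i,1) \<in> mons N}. monom (c (i,1)) i)"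

lemma fin_row: "finite {i. (i,j) \<in> mons N}"
  by (rule finite_subset[of _ "{..N}"]) (auto simp: mons_def)

lemma finite_mons: "finite (mons N)"
  by (rule finite_subset[of _ "{..N} \<times> {..1}"]) (auto simp: mons_def)

lemma coeff_polA: "coeff (polA N c) n = (if (n,0) \<in> mons N then c (n,0) else 0)"
  unfolding polA_def by (simp add: coeff_sum coeff_monom fin_row sum.delta[OF fin_row] if_distrib cong: if_cong)

lemma coeff_polB: "coeff (polB N c) n = (if (n,1) \<in> mons N then c (n,1) else 0)"
  unfolding polB_def by (simp add: coeff_sum coeff_monom fin_row sum.delta[OF fin_row] if_distrib cong: if_cong)

lemma mons_split: "mons N = (\<lambda>i. (i,0)) ` {i. (i,0) \<in> mons N} \<union> (\<lambda>i. (i,1)) ` {i. (i,1) \<in> mons N}"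
  by (auto simp: mons_def image_iff)

lemma evL_pol: "evL N c a b = poly (polA N c) a + poly (polB N c) a * b"
proof -
  have "evL N c a b = (\<Sum>(i,j)\<in>(\<lambda>i. (i,0)) ` {i. (i,0) \<in> mons N}. c (i,j) * a^i * b^j)
      + (\<Sum>(i,j)\<in>(\<lambda>i. (i,1::nat)) ` {i. (i,1) \<in> mons N}. c (i,j) * a^i * b^j)"
    unfolding evL_def by (subst mons_split, rule sum.union_disjoint) (auto simp: fin_row)
  also have "\<dots> = (\<Sum>i\<in>{i. (i,0) \<in> mons N}. c (i,0) * a^i) + (\<Sum>i\<in>{i. (i,1) \<in> mons N}. c (i,1) * a^i * b)"
    by (subst sum.reindex, simp add: inj_on_def)+ simp
  also have "\<dots> = poly (polA N c) a + poly (polB N c) a * b"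
    by (simp add: polA_def polB_def poly_sum poly_monom sum_distrib_right)
  finally show ?thesis .
qed

lemma inL_iff: "inL M (polA N c) (polB N c) \<longleftrightarrow> (\<forall>i j. (i,j) \<in> mons N \<longrightarrow> M < 2*i+3*j \<longrightarrow> c (i,j) = 0)"
proof
  assume L: "inL M (polA N c) (polB N c)"
  show "\<forall>i j. (i,j) \<in> mons N \<longrightarrow> M < 2*i+3*j \<longrightarrow> c (i,j) = 0"
  proof (intro allI impI)
    fix i j assume m: "(i,j) \<in> mons N" and w: "M < 2*i+3*j"
    have j: "j = 0 \<or> j = 1" using m by (auto simp: mons_def)
    show "c (i,j) = 0"
    proof (rule ccontr)
      assume nz: "c (i,j) \<noteq> 0"
      show False
      proof (cases "j = 0")
        case True
        then have "coeff (polA N c) i \<noteq> 0" using m nz by (simp add: coeff_polA)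
        then have "i \<le> degree (polA N c)" by (rule le_degree)
        then show False using L w True by (simp add: inL_def)
      next
        case False
        then have j1: "j = 1" using j by simp
        then have "coeff (polB N c) i \<noteq> 0" using m nz by (simp add: coeff_polB)
        then have "i \<le> degree (polB N c)" "polB N c \<noteq> 0" by (auto intro: le_degree)
        then show False using L w j1 by (simp add: inL_def)
      qed
    qed
  qed
next
  assume H: "\<forall>i j. (i,j) \<in> mons N \<longrightarrow> M < 2*i+3*j \<longrightarrow> c (i,j) = 0"
  have A: "2 * degree (polA N c) \<le> M"
  proof (cases "polA N c = 0")
    case False
    then have "coeff (polA N c) (degree (polA N c)) \<noteq> 0" by simp
    then have "(degree (polA N c), 0) \<in> mons N" "c (degree (polA N c), 0) \<noteq> 0"
      by (auto simp: coeff_polA split: if_splits)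
    then show ?thesis using H by fastforce
  qed simp
  have B: "polB N c = 0 \<or> 2 * degree (polB N c) + 3 \<le> M"
  proof (cases "polB N c = 0")
    case False
    then have "coeff (polB N c) (degree (polB N c)) \<noteq> 0" by simp
    then have "(degree (polB N c), 1) \<in> mons N" "c (degree (polB N c), 1) \<noteq> 0"
      by (auto simp: coeff_polB split: if_splits)
    then show ?thesis using H by fastforce
  qed simp
  show "inL M (polA N c) (polB N c)" using A B by (simp add: inL_def)
qed

lemma pol_nz:
  assumes "m \<in> mons N" "c m \<noteq> 0"
  shows "polA N c \<noteq> 0 \<or> polB N c \<noteq> 0"
proof -
  obtain i j where m: "m = (i,j)" by force
  have "j = 0 \<or> j = 1" using assms m by (auto simp: mons_def)
  then show ?thesis
  proof
    assume "j = 0"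
    then have "coeff (polA N c) i \<noteq> 0" using assms m by (simp add: coeff_polA)
    then show ?thesis by auto
  next
    assume "j = 1"
    then have "coeff (polB N c) i \<noteq> 0" using assms m by (simp add: coeff_polB)
    then show ?thesis by auto
  qed
qed

definition mw :: "nat \<Rightarrow> nat \<times> nat" where
  "mw w = (if even w then (w div 2, 0) else ((w - 3) div 2, 1))"

lemma mw_unique: "(i,j) \<in> mons N \<Longrightarrow> 2*i+3*j = w \<Longrightarrow> (i,j) = mw w"
  unfolding mons_def mw_def by (auto; presburger)

lemma mw_mem: "2 \<le> w \<Longrightarrow> w \<le> N \<Longrightarrow> mw w \<in> mons N"
  unfolding mons_def mw_def by (auto; presburger)

lemma mons_weight: "(i,j) \<in> mons N \<Longrightarrow> 2*i+3*j \<le> N"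
  by (simp add: mons_def)

lemma card_mons: "1 \<le> m \<Longrightarrow> card (mons m) = m"
proof -
  assume m: "1 \<le> m"
  have eq: "mons m = (\<lambda>i. (i,0::nat)) ` {..m div 2} \<union> (\<lambda>i. (i,1)) ` {..<(m-1) div 2}"
    unfolding mons_def by (auto simp: image_iff; presburger)
  have "card (mons m) = card ((\<lambda>i. (i,0::nat)) ` {..m div 2}) + card ((\<lambda>i. (i,1::nat)) ` {..<(m-1) div 2})"
    unfolding eq by (rule card_Un_disjoint) auto
  also have "\<dots> = (m div 2 + 1) + (m - 1) div 2"
    by (subst card_image, simp add: inj_on_def)+ simp
  also have "\<dots> = m" using m by presburger
  finally show ?thesis .
qed

lemma evL_sum: "(\<Sum>m\<in>mons N. (a ^ fst m * b ^ snd m) * c m) = evL N c a b"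
  unfolding evL_def by (intro sum.cong) (auto simp: algebra_simps)

lemma delta_sum: fixes c :: "nat \<times> nat \<Rightarrow> 'a::field" shows "m0 \<in> mons N \<Longrightarrow> (\<Sum>m\<in>mons N. (if m = m0 then 1 else 0) * c m) = c m0"
proof -
  assume m0: "m0 \<in> mons N"
  have "(\<Sum>m\<in>mons N. (if m = m0 then 1 else 0) * c m) = (\<Sum>m\<in>mons N. if m = m0 then c m else 0)"
    by (intro sum.cong) auto
  also have "\<dots> = c m0" using m0 by (simp add: finite_mons)
  finally show ?thesis .
qed



lemma evL_delta:
  fixes a b :: "'a::field"
  assumes "m0 \<in> mons N"
  shows "evL N (\<lambda>m. if m = m0 then 1 else 0) a b = a ^ fst m0 * b ^ snd m0"
proof -
  have "evL N (\<lambda>m. if m = m0 then 1 else 0) a b = (\<Sum>m\<in>mons N. (a ^ fst m * b ^ snd m) * (if m = m0 then 1 else 0))"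
    by (rule evL_sum[symmetric])
  also have "\<dots> = (\<Sum>m\<in>mons N. if m = m0 then a ^ fst m * b ^ snd m else 0)"
    by (intro sum.cong) auto
  also have "\<dots> = a ^ fst m0 * b ^ snd m0" using assms by (simp add: finite_mons)
  finally show ?thesis .
qed

lemma mons_mono: "M \<le> N \<Longrightarrow> mons M \<subseteq> mons N"
  by (auto simp: mons_def)

lemma evL_ext:
  fixes c :: "nat \<times> nat \<Rightarrow> 'a::field"
  assumes "M \<le> N"
  shows "evL N (\<lambda>m. if m \<in> mons M then c m else 0) a b = evL M c a b"
  unfolding evL_def
  by (rule sum.mono_neutral_cong_right) (use assms mons_mono finite_mons in auto)

lemma SURJ:
  fixes T :: "('a::field \<times> 'a) set"
  assumes two: "(2::'a) \<noteq> 0" and fin: "finite T"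
    and on: "\<forall>q\<in>T. (snd q)^2 = poly (cubic s t) (fst q)"
    and Q: "Q \<in> T" and N: "card T + 1 \<le> N"
  shows "\<exists>c. evL N c (fst Q) (snd Q) \<noteq> 0 \<and> (\<forall>q\<in>T-{Q}. evL N c (fst q) (snd q) = 0)"
proof -
  define r where "r = card T"
  have r1: "1 \<le> r" using fin Q by (auto simp: r_def Suc_le_eq card_gt_0_iff)
  show ?thesis
  proof (cases "r = 1")
    case True
    then have T: "T = {Q}" using Q unfolding r_def by (metis card_1_singletonE singletonD)
    have m0: "(0,0) \<in> mons N" by (simp add: mons_def)
    show ?thesis using T evL_delta[OF m0, of "fst Q" "snd Q"]
      by (intro exI[of _ "\<lambda>m. if m = (0,0) then 1 else 0"]) simp
  next
    case False
    then have r2: "2 \<le> r" using r1 by simp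
    have main: "\<exists>c. evL (r+1) c (fst Q) (snd Q) \<noteq> 0 \<and> (\<forall>q\<in>T-{Q}. evL (r+1) c (fst q) (snd q) = 0)"
    proof (rule ccontr)
      assume "\<not> ?thesis"
      then have H: "\<And>c. (\<forall>q\<in>T-{Q}. evL (r+1) c (fst q) (snd q) = 0) \<Longrightarrow> evL (r+1) c (fst Q) (snd Q) = 0"
        by blast
      obtain xs where xs: "set xs = T - {Q}" "distinct xs"
        using finite_distinct_list[of "T - {Q}"] fin by auto
      have lxs: "length xs = r - 1" using xs Q fin unfolding r_def
        by (metis card_Diff_singleton distinct_card)
      define evs where "evs = map (\<lambda>q m. fst q ^ fst m * snd q ^ snd m) xs"
      have cI: "card (mons (r+1)) = r + 1" by (rule card_mons) simp
      have sol: "\<exists>c. (\<exists>m\<in>mons (r+1). c m \<noteq> 0) \<and> (\<forall>q\<in>T. evL (r+1) c (fst q) (snd q) = 0) \<and> c (mw w) = 0"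
        if w: "2 \<le> w" "w \<le> r + 1" for w
      proof -
        have "length (evs @ [\<lambda>m. if m = mw w then 1 else 0]) < card (mons (r+1))"
          using cI lxs r2 by (simp add: evs_def)
        from UL[OF finite_mons this] obtain c where c: "\<exists>m\<in>mons (r+1). c m \<noteq> 0"
          "\<forall>e\<in>set (evs @ [\<lambda>m. if m = mw w then 1 else 0]). (\<Sum>m\<in>mons (r+1). e m * c m) = 0"
          by blast
        have v0: "\<forall>q\<in>T-{Q}. evL (r+1) c (fst q) (snd q) = 0"
        proof
          fix q assume "q \<in> T - {Q}"
          then have "(\<lambda>m. fst q ^ fst m * snd q ^ snd m) \<in> set evs" using xs by (auto simp: evs_def)
          then have "(\<Sum>m\<in>mons (r+1). (fst q ^ fst m * snd q ^ snd m) * c m) = 0" using c(2) by auto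
          then show "evL (r+1) c (fst q) (snd q) = 0" by (simp add: evL_sum)
        qed
        have "evL (r+1) c (fst Q) (snd Q) = 0" by (rule H[OF v0])
        then have v: "\<forall>q\<in>T. evL (r+1) c (fst q) (snd q) = 0" using v0 by blast
        have "(\<Sum>m\<in>mons (r+1). (if m = mw w then 1 else 0) * c m) = 0" using c(2) by auto
        then have "c (mw w) = 0" using delta_sum[OF mw_mem[OF w], of c] by simp
        then show ?thesis using c(1) v by blast
      qed
      obtain c1 where c1: "\<exists>m\<in>mons (r+1). c1 m \<noteq> 0" "\<forall>q\<in>T. evL (r+1) c1 (fst q) (snd q) = 0"
        "c1 (mw (r+1)) = 0" using sol[of "r+1"] r2 by auto
      obtain c2 where c2: "\<exists>m\<in>mons (r+1). c2 m \<noteq> 0" "\<forall>q\<in>T. evL (r+1) c2 (fst q) (snd q) = 0"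
        "c2 (mw r) = 0" using sol[of r] r2 by auto
      define A1 where "A1 = polA (r+1) c1"
      define B1 where "B1 = polB (r+1) c1"
      define A2 where "A2 = polA (r+1) c2"
      define B2 where "B2 = polB (r+1) c2"
      have van1: "\<forall>q\<in>T. poly A1 (fst q) + poly B1 (fst q) * snd q = 0"
        using c1(2) by (simp add: evL_pol A1_def B1_def)
      have van2: "\<forall>q\<in>T. poly A2 (fst q) + poly B2 (fst q) * snd q = 0"
        using c2(2) by (simp add: evL_pol A2_def B2_def)
      have nz1: "A1 \<noteq> 0 \<or> B1 \<noteq> 0" using c1(1) pol_nz unfolding A1_def B1_def by blast
      have nz2: "A2 \<noteq> 0 \<or> B2 \<noteq> 0" using c2(1) pol_nz unfolding A2_def B2_def by blast
      have L1: "inL r A1 B1" unfolding A1_def B1_def inL_iff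
      proof (intro allI impI)
        fix i j assume m: "(i,j) \<in> mons (r+1)" "r < 2*i+3*j"
        then have "2*i+3*j = r+1" using mons_weight[OF m(1)] by linarith
        then have "(i,j) = mw (r+1)" using mw_unique m(1) by blast
        then show "c1 (i,j) = 0" using c1(3) by simp
      qed
      have L2: "inL (r+1) A2 B2" unfolding A2_def B2_def inL_iff
        using mons_weight by fastforce
      have nL1: "\<not> inL (r-1) A1 B1"
      proof
        assume "inL (r-1) A1 B1"
        from ZC[OF two fin on van1 nz1 this] show False using r2 by (simp add: r_def)
      qed
      have nL2': "\<not> inL (r-1) A2 B2"
      proof
        assume "inL (r-1) A2 B2"
        from ZC[OF two fin on van2 nz2 this] show False using r2 by (simp add: r_def)
      qed
      have nL2: "\<not> inL r A2 B2"
      proof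
        assume Lr: "inL r A2 B2"
        have "inL (r-1) A2 B2" unfolding A2_def B2_def inL_iff
        proof (intro allI impI)
          fix i j assume m: "(i,j) \<in> mons (r+1)" "r - 1 < 2*i+3*j"
          show "c2 (i,j) = 0"
          proof (cases "2*i+3*j = r")
            case True
            then have "(i,j) = mw r" using mw_unique m(1) by blast
            then show ?thesis using c2(3) by simp
          next
            case False
            then have "r < 2*i+3*j" using m(2) by linarith
            then show ?thesis using Lr m(1) unfolding A2_def B2_def inL_iff by blast
          qed
        qed
        then show False using nL2' by simp
      qed
      have eq: "A1 * B2 = A2 * B1"
        by (rule CROSS[OF two fin on van1 van2 L1]) (use L2 in \<open>simp_all add: r_def\<close>)
      show False by (rule PAR[OF r2 L1 nL1 L2 nL2 eq])
    qed
    then obtain c where c: "evL (r+1) c (fst Q) (snd Q) \<noteq> 0" "\<forall>q\<in>T-{Q}. evL (r+1) c (fst q) (snd q) = 0"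
      by blast
    have "r + 1 \<le> N" using N by (simp add: r_def)
    then show ?thesis using c evL_ext[of "r+1" N c]
      by (intro exI[of _ "\<lambda>m. if m \<in> mons (r+1) then c m else 0"]) simp
  qed
qed



lemma dual_iff: "v \<in> dual_code n S \<longleftrightarrow> length v = n \<and> (\<forall>w\<in>S. (\<Sum>i<n. v ! i * w ! i) = 0)"
  by (simp add: dual_code_def)

lemma cw_nth: "i < length D \<Longrightarrow> (map (\<lambda>(x, y). evL k c x y) D) ! i = evL k c (fst (D ! i)) (snd (D ! i))"
  by (simp add: case_prod_beta)

lemma cw_minus_Inf: "map (\<lambda>(x, y). evL (k - 1) c x y) D \<in> Lcode_minus k D Inf"
  by (auto simp: Lcode_minus_def)

lemma cw_minus_Aff: "evL k c a b = 0 \<Longrightarrow> map (\<lambda>(x, y). evL k c x y) D \<in> Lcode_minus k D (Aff a b)"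
  by (auto simp: Lcode_minus_def)

lemma cw_L: "map (\<lambda>(x, y). evL k c x y) D \<in> Lcode k D"
  by (auto simp: Lcode_def)

lemma Lcode_minus_sub: "Lcode_minus k D P \<subseteq> Lcode k D"
proof
  fix u assume u: "u \<in> Lcode_minus k D P"
  show "u \<in> Lcode k D"
  proof (cases P)
    case Inf
    then obtain c where c: "u = map (\<lambda>(x, y). evL (k - 1) c x y) D" using u by (auto simp: Lcode_minus_def)
    have "u = map (\<lambda>(x, y). evL k (\<lambda>m. if m \<in> mons (k-1) then c m else 0) x y) D"
      unfolding c using evL_ext[of "k-1" k c] by (auto simp: case_prod_beta)
    then show ?thesis by (auto simp: Lcode_def)
  next
    case (Aff a b)
    then show ?thesis using u by (auto simp: Lcode_minus_def Lcode_def)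
  qed
qed

lemma single_sum_contra:
  fixes w u :: "'a::field list"
  assumes "j < n" "w ! j \<noteq> 0" "u ! j \<noteq> 0"
    and "\<forall>i<n. i \<noteq> j \<longrightarrow> w ! i = 0 \<or> u ! i = 0"
    and "(\<Sum>i<n. w ! i * u ! i) = 0"
  shows False
proof -
  have "(\<Sum>i<n. w ! i * u ! i) = w ! j * u ! j + (\<Sum>i\<in>{..<n} - {j}. w ! i * u ! i)"
    using assms(1) by (subst sum.remove[of _ j]) auto
  also have "(\<Sum>i\<in>{..<n} - {j}. w ! i * u ! i) = 0"
    using assms(4) by (intro sum.neutral) auto
  finally show False using assms(2,3,5) by simp
qed

lemma GOP:
  fixes D :: "('a::field \<times> 'a) list"
  assumes two: "(2::'a) \<noteq> 0" and dist: "distinct D"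
    and on: "\<forall>q\<in>set D. (snd q)^2 = poly (cubic s t) (fst q)"
    and Prat: "case P of Inf \<Rightarrow> True | Aff a b \<Rightarrow> b^2 = poly (cubic s t) a \<and> (a, b) \<notin> set D"
    and k2: "2 \<le> k"
    and w: "w \<in> Omega_code_minus k D P"
    and nz: "j < length D" "w ! j \<noteq> 0"
    and wt: "card {i. i < length D \<and> w ! i \<noteq> 0} \<le> k - 2"
  shows False
proof -
  define n where "n = length D"
  define S where "S = {i. i < n \<and> w ! i \<noteq> 0}"
  have finS: "finite S" by (simp add: S_def)
  have jS: "j \<in> S" using nz by (simp add: S_def n_def)
  have cS: "card S \<le> k - 2" using wt by (simp add: S_def n_def)
  have orth: "\<And>u. u \<in> Lcode_minus k D P \<Longrightarrow> (\<Sum>i<n. w ! i * u ! i) = 0"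
    using w by (simp add: Omega_code_minus_def dual_iff n_def)
  have onS: "\<forall>q\<in>(\<lambda>i. D ! i) ` S. (snd q)^2 = poly (cubic s t) (fst q)"
    using on by (auto simp: S_def n_def)
  have cT0: "card ((\<lambda>i. D ! i) ` S) \<le> card S" by (rule card_image_le[OF finS])
  have neq: "\<And>i. i \<in> S \<Longrightarrow> i \<noteq> j \<Longrightarrow> D ! i \<noteq> D ! j"
    using dist jS by (auto simp: S_def n_def nth_eq_iff_index_eq)
  show False
  proof (cases P)
    case Inf
    define T where "T = (\<lambda>i. D ! i) ` S"
    have "card T + 1 \<le> k - 1" using cT0 cS k2 by (simp add: T_def)
    moreover have "finite T" using finS by (simp add: T_def)
    moreover have "\<forall>q\<in>T. (snd q)^2 = poly (cubic s t) (fst q)" using onS by (simp add: T_def)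
    moreover have "D ! j \<in> T" using jS by (simp add: T_def)
    ultimately obtain c where
      c: "evL (k-1) c (fst (D!j)) (snd (D!j)) \<noteq> 0" "\<forall>q\<in>T-{D!j}. evL (k-1) c (fst q) (snd q) = 0"
      using SURJ[OF two] by blast
    define u where "u = map (\<lambda>(x, y). evL (k - 1) c x y) D"
    have "u \<in> Lcode_minus k D P" unfolding u_def Inf by (rule cw_minus_Inf)
    then have z: "(\<Sum>i<n. w ! i * u ! i) = 0" by (rule orth)
    show False
    proof (rule single_sum_contra[OF _ nz(2) _ _ z])
      show "j < n" using nz by (simp add: n_def)
      show "u ! j \<noteq> 0" using c nz by (simp add: u_def case_prod_beta)
      show "\<forall>i<n. i \<noteq> j \<longrightarrow> w ! i = 0 \<or> u ! i = 0"
      proof (intro allI impI)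
        fix i assume i: "i < n" "i \<noteq> j"
        show "w ! i = 0 \<or> u ! i = 0"
        proof (cases "i \<in> S")
          case True
          then have "D ! i \<in> T - {D ! j}" using neq i by (auto simp: T_def)
          then show ?thesis using c(2) i by (simp add: u_def case_prod_beta n_def)
        qed (use i in \<open>simp add: S_def\<close>)
      qed
    qed
  next
    case (Aff a b)
    define T where "T = insert (a,b) ((\<lambda>i. D ! i) ` S)"
    have ab: "b^2 = poly (cubic s t) a" "(a,b) \<notin> set D" using Prat Aff by auto
    have "card T \<le> card ((\<lambda>i. D ! i) ` S) + 1" unfolding T_def
      using card_insert_le_m1 finS by (simp add: card_insert_if)
    then have "card T + 1 \<le> k" using cT0 cS k2 by simp
    moreover have "finite T" using finS by (simp add: T_def)
    moreover have "\<forall>q\<in>T. (snd q)^2 = poly (cubic s t) (fst q)" using onS ab by (simp add: T_def)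
    moreover have "D ! j \<in> T" using jS by (simp add: T_def)
    ultimately obtain c where
      c: "evL k c (fst (D!j)) (snd (D!j)) \<noteq> 0" "\<forall>q\<in>T-{D!j}. evL k c (fst q) (snd q) = 0"
      using SURJ[OF two] by blast
    have "D ! j \<noteq> (a,b)" using ab(2) nz(1) nth_mem[of j D] by metis
    then have "(a,b) \<in> T - {D ! j}" by (auto simp: T_def)
    then have "evL k c a b = 0" using c(2)[rule_format, of "(a,b)"] by simp
    define u where "u = map (\<lambda>(x, y). evL k c x y) D"
    have "u \<in> Lcode_minus k D P" using Aff \<open>evL k c a b = 0\<close> by (simp add: u_def cw_minus_Aff)
    then have z: "(\<Sum>i<n. w ! i * u ! i) = 0" by (rule orth)
    show False
    proof (rule single_sum_contra[OF _ nz(2) _ _ z])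
      show "j < n" using nz by (simp add: n_def)
      show "u ! j \<noteq> 0" using c nz by (simp add: u_def case_prod_beta)
      show "\<forall>i<n. i \<noteq> j \<longrightarrow> w ! i = 0 \<or> u ! i = 0"
      proof (intro allI impI)
        fix i assume i: "i < n" "i \<noteq> j"
        show "w ! i = 0 \<or> u ! i = 0"
        proof (cases "i \<in> S")
          case True
          then have "D ! i \<in> T - {D ! j}" using neq i by (auto simp: T_def)
          then show ?thesis using c(2) i by (simp add: u_def case_prod_beta n_def)
        qed (use i in \<open>simp add: S_def\<close>)
      qed
    qed
  qed
qed



definition mon :: "nat \<Rightarrow> nat \<Rightarrow> nat \<times> nat" where
  "mon k r = (if r < k div 2 + 1 then (r, 0) else (r - (k div 2 + 1), 1))"

lemma hcol_len: "1 \<le> k \<Longrightarrow> length (hcol k a b) = k"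
  unfolding hcol_def by simp

lemma hcol_nth: "1 \<le> k \<Longrightarrow> r < k \<Longrightarrow> hcol k a b ! r = a ^ fst (mon k r) * b ^ snd (mon k r)"
  unfolding hcol_def mon_def by (cases "r = k div 2") (auto simp: nth_append)

lemma mon_mem: "r < k \<Longrightarrow> mon k r \<in> mons k"
  unfolding mon_def mons_def by auto

lemma synd_len: "length (syndrome k D v) = k"
  by (simp add: syndrome_def)

lemma synd_nth: "1 \<le> k \<Longrightarrow> r < k \<Longrightarrow> syndrome k D v ! r =
   (\<Sum>l<length D. (fst (D ! l) ^ fst (mon k r) * snd (D ! l) ^ snd (mon k r)) * v ! l)"
  unfolding syndrome_def by (simp add: hcol_nth)

lemma evL_lin: "evL N (\<lambda>m. c1 m - z * c2 m) a b = evL N c1 a b - z * evL N c2 a b"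
  unfolding evL_def by (simp add: case_prod_beta sum_subtractf sum_distrib_left algebra_simps)

lemma aff_ident:
  fixes D :: "('a::field \<times> 'a) list"
  assumes v: "v \<in> Omega_code_minus k D (Aff a b)" and m: "m \<in> mons k"
  shows "(\<Sum>l<length D. v ! l * (fst (D ! l) ^ fst m * snd (D ! l) ^ snd m))
       = (a ^ fst m * b ^ snd m) * (\<Sum>l<length D. v ! l)"
proof -
  define z where "z = a ^ fst m * b ^ snd m"
  define c where "c = (\<lambda>m'. (if m' = m then 1 else 0) - z * (if m' = (0::nat,0::nat) then 1 else (0::'a)))"
  have m0: "(0,0) \<in> mons k" by (simp add: mons_def)
  have ev: "evL k c x y = x ^ fst m * y ^ snd m - z" for x y
    unfolding c_def evL_lin evL_delta[OF m] evL_delta[OF m0] by simp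
  have "evL k c a b = 0" by (simp add: ev z_def)
  then have "map (\<lambda>(x, y). evL k c x y) D \<in> Lcode_minus k D (Aff a b)" by (rule cw_minus_Aff)
  then have "(\<Sum>l<length D. v ! l * (map (\<lambda>(x, y). evL k c x y) D) ! l) = 0"
    using v by (auto simp: Omega_code_minus_def dual_iff)
  then have "(\<Sum>l<length D. v ! l * (fst (D ! l) ^ fst m * snd (D ! l) ^ snd m - z)) = 0"
    by (simp add: case_prod_beta ev)
  then show ?thesis
    by (simp add: right_diff_distrib sum_subtractf sum_distrib_left z_def algebra_simps)
qed

lemma inf_ident:
  fixes D :: "('a::field \<times> 'a) list"
  assumes v: "v \<in> Omega_code_minus k D Inf" and m: "m \<in> mons (k - 1)"
  shows "(\<Sum>l<length D. v ! l * (fst (D ! l) ^ fst m * snd (D ! l) ^ snd m)) = 0"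
proof -
  define c where "c = (\<lambda>m'. if m' = m then 1 else (0::'a))"
  have "map (\<lambda>(x, y). evL (k - 1) c x y) D \<in> Lcode_minus k D Inf" by (rule cw_minus_Inf)
  then have "(\<Sum>l<length D. v ! l * (map (\<lambda>(x, y). evL (k - 1) c x y) D) ! l) = 0"
    using v by (auto simp: Omega_code_minus_def dual_iff)
  moreover have ev: "evL (k-1) c x y = x ^ fst m * y ^ snd m" for x y :: 'a
    unfolding c_def by (rule evL_delta[OF m])
  ultimately show ?thesis by (simp add: case_prod_beta)
qed

lemma in_C:
  fixes D :: "('a::field \<times> 'a) list"
  assumes len: "length v = length D"
    and H: "\<forall>m\<in>mons k. (\<Sum>l<length D. v ! l * (fst (D ! l) ^ fst m * snd (D ! l) ^ snd m)) = 0"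
  shows "v \<in> Omega_code k D"
  unfolding Omega_code_def dual_iff
proof (intro conjI ballI)
  show "length v = length D" by (rule len)
  fix u assume "u \<in> Lcode k D"
  then obtain c where u: "u = map (\<lambda>(x, y). evL k c x y) D" by (auto simp: Lcode_def)
  have "(\<Sum>i<length D. v ! i * u ! i)
      = (\<Sum>i<length D. v ! i * (\<Sum>m\<in>mons k. (fst (D ! i) ^ fst m * snd (D ! i) ^ snd m) * c m))"
    by (simp add: u case_prod_beta evL_sum)
  also have "\<dots> = (\<Sum>m\<in>mons k. c m * (\<Sum>i<length D. v ! i * (fst (D ! i) ^ fst m * snd (D ! i) ^ snd m)))"
    by (simp add: sum_distrib_left sum.swap[of _ "mons k"] algebra_simps)
  also have "\<dots> = 0" using H by simp
  finally show "(\<Sum>i<length D. v ! i * u ! i) = 0" .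
qed



lemma rep_nth: "r < a + 1 + b \<Longrightarrow> (replicate a 0 @ [x] @ replicate b 0) ! r = (if r = a then x else 0)"
  by (auto simp: nth_append)

lemma mon_mem_minus: "r < k \<Longrightarrow> (even k \<longrightarrow> r \<noteq> k div 2) \<Longrightarrow> (odd k \<longrightarrow> r \<noteq> k - 1) \<Longrightarrow> mon k r \<in> mons (k-1)"
  unfolding mon_def mons_def by (auto; presburger)

lemma mon_top_even: "even k \<Longrightarrow> mon k (k div 2) = (k div 2, 0)"
  by (simp add: mon_def)

lemma mon_top_odd: "odd k \<Longrightarrow> 3 \<le> k \<Longrightarrow> mon k (k - 1) = ((k - 3) div 2, 1)"
  unfolding mon_def by (auto; presburger)

theorem theorem3p6:
  fixes s t :: "'a::{finite,field}"
    and D :: "('a \<times> 'a) list"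
    and k :: nat
    and P :: "'a ecpoint"
    and v :: "'a list"
  assumes q_odd: "odd (card (UNIV :: 'a set))"
    and nonsing: "4 * s ^ 3 + 27 * t ^ 2 \<noteq> 0"
    and D_dist: "distinct D"
    and D_on: "\<forall>(x, y)\<in>set D. on_curve s t x y"
    and k_ge: "2 \<le> k" and k_le: "k \<le> length D - 2"
    and rho: "covering_radius (length D) (Omega_code k D) = k - 1"
    and P_rat: "case P of Inf \<Rightarrow> True | Aff a b \<Rightarrow> on_curve s t a b \<and> (a, b) \<notin> set D"
    and v_in: "v \<in> Omega_code_minus k D P - Omega_code k D"
  shows "deep_hole (length D) (Omega_code k D) v
    \<and> (P = Inf \<longrightarrow>
         (even k \<longrightarrow> syndrome k D v =
            replicate (k div 2) 0 @ [\<Sum>i<length D. fst (D ! i) ^ (k div 2) * v ! i]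
              @ replicate ((k - 1) div 2) 0)
       \<and> (odd k \<longrightarrow> syndrome k D v =
            replicate (k - 1) 0 @ [\<Sum>i<length D. fst (D ! i) ^ ((k - 3) div 2) * snd (D ! i) * v ! i]))
    \<and> (\<forall>a b. P = Aff a b \<longrightarrow>
         (\<Sum>i<length D. v ! i) \<noteq> 0
       \<and> syndrome k D v = map (\<lambda>z. (\<Sum>i<length D. v ! i) * z) (hcol k a b))"
proof -
  have two: "(2::'a) \<noteq> 0" by (rule two_nz[OF q_odd])
  define n where "n = length D"
  have on: "\<forall>q\<in>set D. (snd q)^2 = poly (cubic s t) (fst q)"
    using D_on by (auto simp: on_curve_def poly_cubic)
  have Prat: "case P of Inf \<Rightarrow> True | Aff a b \<Rightarrow> b^2 = poly (cubic s t) a \<and> (a, b) \<notin> set D"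
    using P_rat by (cases P) (auto simp: on_curve_def poly_cubic)
  have vm: "v \<in> Omega_code_minus k D P" and vC: "v \<notin> Omega_code k D" using v_in by auto
  have lenv: "length v = n" using vm by (simp add: Omega_code_minus_def dual_iff n_def)
  define C where "C = Omega_code k D"
  have Csub: "C \<subseteq> {u. length u = n}" by (auto simp: C_def Omega_code_def dual_iff n_def)
  have finU: "finite {u :: 'a list. length u = n}"
    using finite_lists_length_eq[of "UNIV :: 'a set" n] by simp
  have finC: "finite C" using finite_subset[OF Csub finU] .
  have zC: "replicate n 0 \<in> C" by (simp add: C_def Omega_code_def dual_iff n_def)
  have dle: "dist_code v C \<le> covering_radius n C"
    unfolding covering_radius_def by (rule Max_ge) (use finU lenv in auto)
  have dge: "k - 1 \<le> dist_code v C"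
  proof -
    have "Min (hamming v ` C) \<in> hamming v ` C" by (rule Min_in) (use finC zC in auto)
    then obtain c where cC: "c \<in> C" and dc: "dist_code v C = hamming v c"
      by (auto simp: dist_code_def)
    have lenc: "length c = n" using cC Csub by auto
    show ?thesis
    proof (rule ccontr)
      assume "\<not> k - 1 \<le> dist_code v C"
      then have hk: "hamming v c \<le> k - 2" using dc by simp
      define w where "w = map (\<lambda>i. v ! i - c ! i) [0..<n]"
      have wn: "\<And>i. i < n \<Longrightarrow> w ! i = v ! i - c ! i" by (simp add: w_def)
      have wm: "w \<in> Omega_code_minus k D P"
        unfolding Omega_code_minus_def dual_iff
      proof (intro conjI ballI)
        show "length w = length D" by (simp add: w_def n_def)
        fix u assume u: "u \<in> Lcode_minus k D P"
        have "(\<Sum>i<n. v ! i * u ! i) = 0" using vm u by (simp add: Omega_code_minus_def dual_iff n_def)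
        moreover have "(\<Sum>i<n. c ! i * u ! i) = 0"
        proof -
          have "u \<in> Lcode k D" using Lcode_minus_sub u by blast
          then show ?thesis using cC by (auto simp: C_def Omega_code_def dual_iff n_def)
        qed
        moreover have "(\<Sum>i<n. w ! i * u ! i) = (\<Sum>i<n. v ! i * u ! i) - (\<Sum>i<n. c ! i * u ! i)"
          by (simp add: wn left_diff_distrib sum_subtractf)
        ultimately show "(\<Sum>i<length D. w ! i * u ! i) = 0" by (simp add: n_def)
      qed
      have "\<exists>j<n. w ! j \<noteq> 0"
      proof (rule ccontr)
        assume "\<not> ?thesis"
        then have "\<forall>i<n. v ! i = c ! i" using wn by auto
        then have "v = c" using lenv lenc by (auto intro: nth_equalityI)
        then show False using cC vC by (simp add: C_def)
      qed
      then obtain j where j: "j < n" "w ! j \<noteq> 0" by blast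
      have "{i. i < length D \<and> w ! i \<noteq> 0} = {i. i < length v \<and> v ! i \<noteq> c ! i}"
        using wn lenv by (auto simp: n_def)
      then have "card {i. i < length D \<and> w ! i \<noteq> 0} \<le> k - 2" using hk by (simp add: hamming_def)
      then show False using GOP[OF two D_dist on Prat k_ge wm] j by (simp add: n_def)
    qed
  qed
  have deep: "deep_hole (length D) (Omega_code k D) v"
    unfolding deep_hole_def using dle dge rho lenv by (simp add: C_def n_def)
  have part2: "P = Inf \<longrightarrow>
         (even k \<longrightarrow> syndrome k D v =
            replicate (k div 2) 0 @ [\<Sum>i<length D. fst (D ! i) ^ (k div 2) * v ! i]
              @ replicate ((k - 1) div 2) 0)
       \<and> (odd k \<longrightarrow> syndrome k D v =
            replicate (k - 1) 0 @ [\<Sum>i<length D. fst (D ! i) ^ ((k - 3) div 2) * snd (D ! i) * v ! i])"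
  proof (intro impI conjI)
    assume PI: "P = Inf"
    have vI: "v \<in> Omega_code_minus k D Inf" using vm PI by simp
    have zero: "syndrome k D v ! r = 0" if r: "r < k" "even k \<longrightarrow> r \<noteq> k div 2" "odd k \<longrightarrow> r \<noteq> k - 1" for r
    proof -
      have mm: "mon k r \<in> mons (k-1)" by (rule mon_mem_minus[OF r])
      have "syndrome k D v ! r = (\<Sum>l<length D. v ! l * (fst (D ! l) ^ fst (mon k r) * snd (D ! l) ^ snd (mon k r)))"
        using k_ge r by (simp add: synd_nth mult.commute)
      also have "\<dots> = 0" by (rule inf_ident[OF vI mm])
      finally show ?thesis .
    qed
    {
      assume ev: "even k"
      show "syndrome k D v = replicate (k div 2) 0 @ [\<Sum>i<length D. fst (D ! i) ^ (k div 2) * v ! i]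
              @ replicate ((k - 1) div 2) 0" (is "_ = ?R")
      proof (rule nth_equalityI)
        show "length (syndrome k D v) = length ?R" using ev k_ge by (simp add: synd_len)
        fix r assume "r < length (syndrome k D v)"
        then have r: "r < k" by (simp add: synd_len)
        have rl: "r < k div 2 + 1 + (k - 1) div 2" using r ev by presburger
        show "syndrome k D v ! r = ?R ! r"
        proof (cases "r = k div 2")
          case True
          then show ?thesis using k_ge r ev rl
            by (simp only: rep_nth) (simp add: synd_nth mon_top_even)
        next
          case False
          then show ?thesis using zero[of r] r ev rl by (simp only: rep_nth) simp
        qed
      qed
    }
    {
      assume od: "odd k"
      have k3: "3 \<le> k" using od k_ge by presburger
      show "syndrome k D v = replicate (k - 1) 0 @ [\<Sum>i<length D. fst (D ! i) ^ ((k - 3) div 2) * snd (D ! i) * v ! i]"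
        (is "_ = ?R")
      proof (rule nth_equalityI)
        show "length (syndrome k D v) = length ?R" using k_ge by (simp add: synd_len)
        fix r assume "r < length (syndrome k D v)"
        then have r: "r < k" by (simp add: synd_len)
        show "syndrome k D v ! r = ?R ! r"
        proof (cases "r = k - 1")
          case True
          have mt: "mon k (k - Suc 0) = ((k-3) div 2, 1)" using mon_top_odd[OF od k3] by simp
          show ?thesis using True k_ge k3 od
            by (simp add: synd_nth mt nth_append)
        next
          case False
          then show ?thesis using zero[of r] r od by (simp add: nth_append)
        qed
      qed
    }
  qed
  have part3: "\<forall>a b. P = Aff a b \<longrightarrow>
         (\<Sum>i<length D. v ! i) \<noteq> 0
       \<and> syndrome k D v = map (\<lambda>z. (\<Sum>i<length D. v ! i) * z) (hcol k a b)"
  proof (intro allI impI)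
    fix a b assume PA: "P = Aff a b"
    have vA: "v \<in> Omega_code_minus k D (Aff a b)" using vm PA by simp
    define lam where "lam = (\<Sum>i<length D. v ! i)"
    have ident: "\<And>m. m \<in> mons k \<Longrightarrow> (\<Sum>l<length D. v ! l * (fst (D ! l) ^ fst m * snd (D ! l) ^ snd m))
       = (a ^ fst m * b ^ snd m) * lam"
      unfolding lam_def by (rule aff_ident[OF vA])
    have lnz: "lam \<noteq> 0"
    proof
      assume "lam = 0"
      then have "v \<in> Omega_code k D" using ident lenv by (intro in_C) (simp_all add: n_def)
      then show False using vC by simp
    qed
    have "syndrome k D v = map (\<lambda>z. lam * z) (hcol k a b)"
    proof (rule nth_equalityI)
      show "length (syndrome k D v) = length (map (\<lambda>z. lam * z) (hcol k a b))"
        using k_ge by (simp add: synd_len hcol_len)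
      fix r assume "r < length (syndrome k D v)"
      then have r: "r < k" by (simp add: synd_len)
      have "syndrome k D v ! r = (\<Sum>l<length D. v ! l * (fst (D ! l) ^ fst (mon k r) * snd (D ! l) ^ snd (mon k r)))"
        using k_ge r by (simp add: synd_nth mult.commute)
      also have "\<dots> = (a ^ fst (mon k r) * b ^ snd (mon k r)) * lam" by (rule ident[OF mon_mem[OF r]])
      also have "\<dots> = map (\<lambda>z. lam * z) (hcol k a b) ! r"
        using k_ge r by (simp add: hcol_len hcol_nth mult.commute)
      finally show "syndrome k D v ! r = map (\<lambda>z. lam * z) (hcol k a b) ! r" .
    qed
    then show "(\<Sum>i<length D. v ! i) \<noteq> 0
       \<and> syndrome k D v = map (\<lambda>z. (\<Sum>i<length D. v ! i) * z) (hcol k a b)"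
      using lnz by (simp add: lam_def)
  qed
  show ?thesis using deep part2 part3 by blast
qed

end
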